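(* Fix an iteration $i$ of the algorithm in the context, and let $z=z^{(i)}$, $\lambda=\lambda^{(i)}$, $\nu=\nu^{(i)}$, $s=s^{(i)}$, $d_z=d_z^{(i)}$, $d_\lambda=d_\lambda^{(i)}$, $d_\nu=d_\nu^{(i)}$, $d_s=d_s^{(i)}$. For $\rho\ge0$ let $\phi(t,\rho)=\mathcal{L}_{\mathrm{aug}}^{\rho}(z+td_z,\lambda+td_\lambda,\nu+td_\nu,s+td_s)$ and $\phi'(0,\rho)$ its derivative in $t$ at $t=0$. Then there exists $\hat\rho\ge0$ such that $\sup_{\rho\ge\hat\rho}\phi'(0,\rho)\le-\frac{1}{2\alpha^{(i)}}\|d_z^{(i)}\|^2.$
   Context: Problem: $\min_{z\in\mathbb{R}^n}J(z)$ s.t. $g(z)\le0$, $h(z)=0$, with $J,g,h$ twice continuously differentiable ($g:\mathbb{R}^n\to\mathbb{R}^m$, $h:\mathbb{R}^n\to\mathbb{R}^p$); $\nabla g,\nabla h$ have component gradients as columns. Augmented Lagrangian: $\mathcal{L}_{\mathrm{aug}}^{\rho}(z,\lambda,\nu,s)=J(z)+(g(z)+s)^\top\lambda+h(z)^\top\nu+\frac{\rho}{2}\|g(z)+s\|^2+\frac{\rho}{2}\|h(z)\|^2$. Algorithm: at iterate $z^{(i)}$ with bounded step $\alpha^{(i)}>0$, $d_z^{(i)}$ is the Euclidean projection of $-\alpha^{(i)}\nabla J(z^{(i)})$ onto $\mathcal{C}^{(i)}=\{d: g(z^{(i)})+\nabla g(z^{(i)})^\top d\le0,\ h(z^{(i)})+\nabla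 h(z^{(i)})^\top d=0\}$, with multipliers $\lambda_G^{(i)}\ge0$, $\nu_G^{(i)}$ satisfying $\frac{1}{\alpha^{(i)}}d_z^{(i)}+\nabla J(z^{(i)})+\nabla g(z^{(i)})\lambda_G^{(i)}+\nabla h(z^{(i)})\nu_G^{(i)}=0$, $\mathrm{diag}(\lambda_G^{(i)})(g(z^{(i)})+\nabla g(z^{(i)})^\top d_z^{(i)})=0$, $h(z^{(i)})+\nabla h(z^{(i)})^\top d_z^{(i)}=0$. Duals: $\lambda^{(0)}=\lambda_G^{(0)}$, $\nu^{(0)}=\nu_G^{(0)}$, $d_\lambda^{(i)}=\lambda_G^{(i)}-\lambda^{(i)}$, $d_\nu^{(i)}=\nu_G^{(i)}-\nu^{(i)}$. Slack $s^{(i)}\in\mathbb{R}^m_{\ge0}$: $s^{(i)}_j=\max\{0,-g_j(z^{(i)})\}$ if the current penalty is $0$, else $\max\{0,-g_j(z^{(i)})-\lambda^{(i)}_j/\rho\}$; $d_s^{(i)}$ is defined by $g(z^{(i)})+\nabla g(z^{(i)})^\top d_z^{(i)}+s^{(i)}+d_s^{(i)}=0$. Standing assumptions: $\mathcal{C}^{(i)}\ne\emptyset$ for all $i$; all $z^{(i)}$, $z^{(i)}+d_z^{(i)}$ lie in a compact set; $J,g,h$ and their first and second derivatives are uniformly bounded there. Assumption (R): for all $i$, $\nabla h(z^{(i)})$ together with the columns $\nabla g_j(z^{(i)})$ active in the projection problem has full column rank, and strict complementarity holds. *)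

theory Defs
  imports "HOL-Analysis.Analysis"
begin

definition C2_with :: "(real^'n \<Rightarrow> real) \<Rightarrow> (real^'n \<Rightarrow> real^'n) \<Rightarrow> (real^'n \<Rightarrow> real^'n^'n) \<Rightarrow> bool" where
  "C2_with f gf Hf \<longleftrightarrow>
     (\<forall>x. (f has_derivative (\<lambda>v. gf x \<bullet> v)) (at x)) \<and>
     (\<forall>x. (gf has_derivative (\<lambda>v. Hf x *v v)) (at x)) \<and>
     continuous_on UNIV Hf"

text \<open>Augmented Lagrangian. The matrix Gg x (type real^'m^'n, an n x m matrix)
  plays the role of nabla g(x): its j-th column is the gradient of g_j.\<close>
definition L_aug ::
  "(real^'n \<Rightarrow> real) \<Rightarrow> (real^'n \<Rightarrow> real^'m) \<Rightarrow> (real^'n \<Rightarrow> real^'p) \<Rightarrow> real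
    \<Rightarrow> real^'n \<Rightarrow> real^'m \<Rightarrow> real^'p \<Rightarrow> real^'m \<Rightarrow> real" where
  "L_aug J g h \<rho> z lam nu s =
     J z + (g z + s) \<bullet> lam + h z \<bullet> nu
     + \<rho> / 2 * (norm (g z + s))\<^sup>2 + \<rho> / 2 * (norm (h z))\<^sup>2"

definition lin_set ::
  "(real^'n \<Rightarrow> real^'m) \<Rightarrow> (real^'n \<Rightarrow> real^'m^'n) \<Rightarrow> (real^'n \<Rightarrow> real^'p) \<Rightarrow> (real^'n \<Rightarrow> real^'p^'n)
    \<Rightarrow> real^'n \<Rightarrow> (real^'n) set" where
  "lin_set g Gg h Gh z =
     {d. (\<forall>j. (g z + transpose (Gg z) *v d) $ j \<le> 0) \<and> h z + transpose (Gh z) *v d = 0}"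

end

theory Submission
  imports Defs
begin

lemma vec_deriv:
  fixes g :: "real^'n \<Rightarrow> real^'m" and Gg :: "real^'n \<Rightarrow> real^'m^'n"
  assumes "\<forall>j. ((\<lambda>x. g x $ j) has_derivative (\<lambda>v. column j (Gg z) \<bullet> v)) (at z)"
  shows "(g has_derivative (\<lambda>v. transpose (Gg z) *v v)) (at z)"
proof -
  have e: "(transpose (Gg z) *v v) $ j = column j (Gg z) \<bullet> v" for v j
    by (simp add: matrix_vector_mult_def transpose_def column_def inner_vec_def mult.commute)
  show ?thesis
    apply (subst has_derivative_componentwise_within)
    apply (auto simp: Basis_vec_def)
    using assms e by (simp add: cart_eq_inner_axis[symmetric] inner_axis)
qed

lemma line_deriv:
  fixes g :: "real^'n \<Rightarrow> 'b::real_normed_vector"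
  assumes "(g has_derivative g') (at z)"
  shows "((\<lambda>t::real. g (z + t *\<^sub>R dz)) has_derivative (\<lambda>t. g' (t *\<^sub>R dz))) (at 0)"
proof -
  have D: "((\<lambda>t::real. z + t *\<^sub>R dz) has_derivative (\<lambda>t. t *\<^sub>R dz)) (at 0)"
    by (auto intro!: derivative_eq_intros)
  have "(g has_derivative g') (at (z + 0 *\<^sub>R dz))" using assms by simp
  from has_derivative_compose[OF D this] show ?thesis by (simp add: o_def)
qed

lemma phi_deriv:
  fixes J :: "real^'n \<Rightarrow> real" and g :: "real^'n \<Rightarrow> real^'m" and h :: "real^'n \<Rightarrow> real^'p"
  assumes dJ: "(J has_derivative (\<lambda>v. gJ \<bullet> v)) (at z)"
    and dg: "(g has_derivative (\<lambda>v. Ag *v v)) (at z)"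
    and dh: "(h has_derivative (\<lambda>v. Ah *v v)) (at z)"
  shows "deriv (\<lambda>t. L_aug J g h \<rho> (z + t *\<^sub>R dz) (lam + t *\<^sub>R dl)
                        (nu + t *\<^sub>R dn) (s + t *\<^sub>R ds)) 0
     = gJ \<bullet> dz + ((Ag *v dz + ds) \<bullet> lam + (g z + s) \<bullet> dl) + ((Ah *v dz) \<bullet> nu + h z \<bullet> dn)
       + \<rho> * ((g z + s) \<bullet> (Ag *v dz + ds)) + \<rho> * (h z \<bullet> (Ah *v dz))"
proof -
  note a = line_deriv[OF dJ, of dz] line_deriv[OF dg, of dz] line_deriv[OF dh, of dz]
  have "((\<lambda>t. L_aug J g h \<rho> (z + t *\<^sub>R dz) (lam + t *\<^sub>R dl)
                        (nu + t *\<^sub>R dn) (s + t *\<^sub>R ds)) has_derivative (\<lambda>t. (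
       gJ \<bullet> dz + ((Ag *v dz + ds) \<bullet> lam + (g z + s) \<bullet> dl) + ((Ah *v dz) \<bullet> nu + h z \<bullet> dn)
       + \<rho> * ((g z + s) \<bullet> (Ag *v dz + ds)) + \<rho> * (h z \<bullet> (Ah *v dz))) * t)) (at 0)"
    unfolding L_aug_def power2_norm_eq_inner
    apply (rule derivative_eq_intros a | simp)+
    apply (rule ext)
    apply (simp add: matrix_vector_mult_scaleR inner_add_left inner_add_right inner_commute algebra_simps)
    done
  then show ?thesis
    by (intro DERIV_imp_deriv) (simp add: has_field_derivative_def)
qed

lemma mv_inner_transpose: "((M::real^'a^'b) *v x) \<bullet> y = x \<bullet> (transpose M *v y)"
  by (metis dot_lmul_matrix inner_commute vector_transpose_matrix)

theorem lemma4p5: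
  fixes J :: "real^'n \<Rightarrow> real" and gJ :: "real^'n \<Rightarrow> real^'n" and HJ :: "real^'n \<Rightarrow> real^'n^'n"
    and g :: "real^'n \<Rightarrow> real^'m" and Gg :: "real^'n \<Rightarrow> real^'m^'n" and Hg :: "'m \<Rightarrow> real^'n \<Rightarrow> real^'n^'n"
    and h :: "real^'n \<Rightarrow> real^'p" and Gh :: "real^'n \<Rightarrow> real^'p^'n" and Hh :: "'p \<Rightarrow> real^'n \<Rightarrow> real^'n^'n"
    and z dz :: "real^'n" and \<alpha> rho_cur :: real
    and lamG lam s ds :: "real^'m" and nuG nu :: "real^'p"
  assumes C2J: "C2_with J gJ HJ"
    and C2g: "\<forall>j. C2_with (\<lambda>x. g x $ j) (\<lambda>x. column j (Gg x)) (Hg j)"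
    and C2h: "\<forall>k. C2_with (\<lambda>x. h x $ k) (\<lambda>x. column k (Gh x)) (Hh k)"
    and alpha_pos: "\<alpha> > 0"
    and C_nonempty: "lin_set g Gg h Gh z \<noteq> {}"
    and dz_in: "dz \<in> lin_set g Gg h Gh z"
    and dz_proj: "\<forall>d \<in> lin_set g Gg h Gh z. dist dz (- \<alpha> *\<^sub>R gJ z) \<le> dist d (- \<alpha> *\<^sub>R gJ z)"
    and lamG_nonneg: "\<forall>j. lamG $ j \<ge> 0"
    and stat: "(1 / \<alpha>) *\<^sub>R dz + gJ z + Gg z *v lamG + Gh z *v nuG = 0"
    and compl: "\<forall>j. lamG $ j * (g z + transpose (Gg z) *v dz) $ j = 0"
    and eqlin: "h z + transpose (Gh z) *v dz = 0"
    and rho_cur_nonneg: "rho_cur \<ge> 0"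
    and s_def: "\<forall>j. s $ j = (if rho_cur = 0 then max 0 (- g z $ j)
                               else max 0 (- g z $ j - lam $ j / rho_cur))"
    and ds_def: "g z + transpose (Gg z) *v dz + s + ds = 0"
  shows "\<exists>rho_hat \<ge> 0. \<forall>\<rho> \<ge> rho_hat.
           deriv (\<lambda>t. L_aug J g h \<rho> (z + t *\<^sub>R dz) (lam + t *\<^sub>R (lamG - lam))
                        (nu + t *\<^sub>R (nuG - nu)) (s + t *\<^sub>R ds)) 0
           \<le> - (1 / (2 * \<alpha>)) * (norm dz)\<^sup>2"
proof -
  define A where "A = transpose (Gg z) *v dz"
  define B where "B = transpose (Gh z) *v dz"
  define w where "w = g z + s"
  define P where "P = 2 * (w \<bullet> (lamG - lam)) + 2 * (h z \<bullet> (nuG - nu))"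
  define Q where "Q = w \<bullet> w + h z \<bullet> h z"
  have dJ: "(J has_derivative (\<lambda>v. gJ z \<bullet> v)) (at z)" using C2J by (simp add: C2_with_def)
  have dg: "(g has_derivative (\<lambda>v. transpose (Gg z) *v v)) (at z)"
    by (rule vec_deriv) (use C2g in \<open>simp add: C2_with_def\<close>)
  have dh: "(h has_derivative (\<lambda>v. transpose (Gh z) *v v)) (at z)"
    by (rule vec_deriv) (use C2h in \<open>simp add: C2_with_def\<close>)
  have f1: "A + ds = - w" using ds_def unfolding A_def w_def
    by (simp add: algebra_simps eq_neg_iff_add_eq_0)
  have f2: "B = - h z" using eqlin unfolding B_def by (simp add: eq_neg_iff_add_eq_0 add.commute)
  have "((1 / \<alpha>) *\<^sub>R dz + gJ z + Gg z *v lamG + Gh z *v nuG) \<bullet> dz = 0" using stat by simp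
  hence f3: "gJ z \<bullet> dz = -(1/\<alpha>) * (dz \<bullet> dz) - lamG \<bullet> A - nuG \<bullet> B"
    unfolding A_def B_def by (simp add: inner_add_left mv_inner_transpose algebra_simps)
  have f4: "lamG \<bullet> (g z + A) = 0"
    unfolding inner_vec_def A_def using compl by (intro sum.neutral) simp
  have f5: "lamG \<bullet> s \<ge> 0"
    unfolding inner_vec_def using lamG_nonneg s_def by (auto intro!: sum_nonneg)
  have D: "deriv (\<lambda>t. L_aug J g h \<rho> (z + t *\<^sub>R dz) (lam + t *\<^sub>R (lamG - lam))
                        (nu + t *\<^sub>R (nuG - nu)) (s + t *\<^sub>R ds)) 0
      = -(1/\<alpha>) * (norm dz)\<^sup>2 - lamG \<bullet> s + P - \<rho> * Q" for \<rho>
  proof -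
    have "deriv (\<lambda>t. L_aug J g h \<rho> (z + t *\<^sub>R dz) (lam + t *\<^sub>R (lamG - lam))
                        (nu + t *\<^sub>R (nuG - nu)) (s + t *\<^sub>R ds)) 0
      = gJ z \<bullet> dz + ((A + ds) \<bullet> lam + w \<bullet> (lamG - lam)) + (B \<bullet> nu + h z \<bullet> (nuG - nu))
       + \<rho> * (w \<bullet> (A + ds)) + \<rho> * (h z \<bullet> B)"
      unfolding A_def B_def w_def by (rule phi_deriv[OF dJ dg dh])
    also have "\<dots> = -(1/\<alpha>) * (norm dz)\<^sup>2 - lamG \<bullet> s + P - \<rho> * Q"
      unfolding f1 f3 f2 P_def Q_def power2_norm_eq_inner
      using f4 unfolding w_def
      by (simp add: inner_add_left inner_add_right inner_diff_left inner_diff_right inner_commute algebra_simps)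
    finally show ?thesis .
  qed
  have Qnn: "Q \<ge> 0" unfolding Q_def by simp
  have key: "P \<le> \<rho> * Q" if r: "\<rho> \<ge> max 0 (P / Q)" for \<rho>
  proof (cases "Q = 0")
    case True
    hence "w = 0" "h z = 0" unfolding Q_def
      by (metis add_nonneg_eq_0_iff inner_ge_zero inner_eq_zero_iff)+
    hence "P = 0" unfolding P_def by simp
    thus ?thesis using True by simp
  next
    case False
    hence Qp: "Q > 0" using Qnn by simp
    from r have "P / Q \<le> \<rho>" by simp
    thus "P \<le> \<rho> * Q" using Qp by (simp add: divide_le_eq)
  qed
  show ?thesis
  proof (rule exI[of _ "max 0 (P / Q)"], intro conjI allI impI)
    fix \<rho> :: real assume r: "\<rho> \<ge> max 0 (P / Q)"
    have "-(1/\<alpha>) * (norm dz)\<^sup>2 \<le> - (1 / (2 * \<alpha>)) * (norm dz)\<^sup>2"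
      using alpha_pos by (simp add: field_simps)
    with key[OF r] show "deriv (\<lambda>t. L_aug J g h \<rho> (z + t *\<^sub>R dz) (lam + t *\<^sub>R (lamG - lam))
                      (nu + t *\<^sub>R (nuG - nu)) (s + t *\<^sub>R ds)) 0
         \<le> - (1 / (2 * \<alpha>)) * (norm dz)\<^sup>2" unfolding D using f5 by linarith
  qed simp
qed

end
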